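(* For an $E$-linear code $C$ of length $2n$, $C^{\perp_{S_L}}=C^{\perp_S}$ if and only if $C$ is left symplectic nice. Equivalently, $C^{\perp_{S_L}}=C^{\perp_S}$ if and only if $C$ is free.
   Context: $E=\langle \kappa,\tau \mid 2\kappa=2\tau=0,\ \kappa^2=\kappa,\ \tau^2=\tau,\ \kappa\tau=\kappa,\ \tau\kappa=\tau\rangle$ is the non-unital ring $\{0,\kappa,\tau,\zeta\}$ ($|E|=4$), $\zeta=\kappa+\tau$, with $e\kappa=e\tau=e$, $e\zeta=0$ for all $e\in E$. Every $e\in E$ is uniquely $u\kappa+v\zeta$ ($u,v\in\mathbb{F}_2$); $\pi(u\kappa+v\zeta)=u$, componentwise. An $E$-linear code of length $2n$ is a left $E$-submodule $C\subseteq E^{2n}$; $C_{Res}=\pi(C)$, $C_{Tor}=\{v\in\mathbb{F}_2^{2n}:\zeta v\in C\}$ (componentwise, $0\cdot\zeta=0,1\cdot\zeta=\zeta$); $C$ is free if $C_{Res}=C_{Tor}$. Symplectic inner product: $\langle (u|v),(u'|v')\rangle_s=\sum_i u_iv'_i+\sum_i v_iu'_i$. $C^{\perp_{S_L}}=\{z\in E^{2n}:\langle z,w\rangle_s=0\ \forall w\in C\}$, $C^{\perp_{S_R}}=\{z\in E^{2n}:\langle w,z\rangle_s=0\ \forall w\in C\}$, $C^{\perp_S}=C^{\perp_{S_L}}\cap C^{\perp_{S_R}}$. $C$ is left symplectic nice if $|C|\,|C^{\perp_{S_L}}|=|E|^{2n}$. *)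

theory Defs
  imports Main
begin

text \<open>Additively E is F2 x F2 with basis kappa, zeta: 0 = (0,0), kappa = (1,0),
  zeta = (0,1), tau = kappa + zeta = (1,1).\<close>

datatype E = E0 | Kap | Tau | Zet

fun E_enc :: "E \<Rightarrow> bool \<times> bool" where
  "E_enc E0 = (False, False)"
| "E_enc Kap = (True, False)"
| "E_enc Zet = (False, True)"
| "E_enc Tau = (True, True)"

definition E_dec :: "bool \<times> bool \<Rightarrow> E" where
  "E_dec p = (case p of (False, False) \<Rightarrow> E0 | (True, False) \<Rightarrow> Kap
              | (False, True) \<Rightarrow> Zet | (True, True) \<Rightarrow> Tau)"

lemma E_dec_enc[simp]: "E_dec (E_enc x) = x"
  by (cases x) (auto simp: E_dec_def)

lemma E_enc_dec[simp]: "E_enc (E_dec p) = p"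
  by (cases p) (auto simp: E_dec_def split: bool.splits)

instantiation E :: ring
begin
definition zero_E_def: "0 = E0"
definition plus_E_def: "x + y = E_dec (fst (E_enc x) \<noteq> fst (E_enc y), snd (E_enc x) \<noteq> snd (E_enc y))"
definition uminus_E_def: "- (x::E) = x"
definition minus_E_def: "(x::E) - y = x + y"
definition times_E_def: "(x::E) * y = (if y = Kap \<or> y = Tau then x else E0)"
instance
proof
  fix a b c :: E
  show "a + b + c = a + (b + c)"
    by (cases a; cases b; cases c) (simp_all add: plus_E_def E_dec_def)
  show "a + b = b + a"
    by (cases a; cases b) (simp_all add: plus_E_def E_dec_def)
  show "0 + a = a"
    by (cases a) (simp_all add: plus_E_def zero_E_def E_dec_def)
  show "- a + a = 0"
    by (cases a) (simp_all add: plus_E_def zero_E_def uminus_E_def E_dec_def)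
  show "a - b = a + - b" by (simp add: minus_E_def uminus_E_def)
  show "a * b * c = a * (b * c)"
    by (cases a; cases b; cases c) (simp_all add: times_E_def)
  show "(a + b) * c = a * c + b * c"
    by (cases a; cases b; cases c) (simp_all add: times_E_def plus_E_def E_dec_def)
  show "a * (b + c) = a * b + a * c"
    by (cases a; cases b; cases c) (simp_all add: times_E_def plus_E_def E_dec_def)
qed
end

abbreviation kappa :: E where "kappa \<equiv> Kap"
abbreviation tau :: E where "tau \<equiv> Tau"
abbreviation zeta :: E where "zeta \<equiv> Zet"

lemma E_relations:
  "kappa + kappa = 0" "tau + tau = 0" "kappa * kappa = kappa" "tau * tau = tau"
  "kappa * tau = kappa" "tau * kappa = tau" "zeta = kappa + tau"
  "\<And>e::E. e * kappa = e" "\<And>e::E. e * tau = e" "\<And>e::E. e * zeta = 0"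
  "(UNIV :: E set) = {0, kappa, tau, zeta}"
  by (auto simp: times_E_def plus_E_def zero_E_def E_dec_def intro: E.exhaust)

definition E_pi :: "E \<Rightarrow> bool" where "E_pi e = fst (E_enc e)"

definition zeta_scal :: "bool \<Rightarrow> E" where "zeta_scal b = (if b then zeta else 0)"

text \<open>Vectors of length 2n are functions on nat supported in {..<2n};
  the i-th coordinate of (u|v) is u_i for i<n and v_{i-n} for n<=i<2n.\<close>

definition Evecs :: "nat \<Rightarrow> (nat \<Rightarrow> E) set" where
  "Evecs n = {x. \<forall>i\<ge>2*n. x i = 0}"

definition F2vecs :: "nat \<Rightarrow> (nat \<Rightarrow> bool) set" where
  "F2vecs n = {x. \<forall>i\<ge>2*n. x i = False}"

definition E_linear_code :: "nat \<Rightarrow> (nat \<Rightarrow> E) set \<Rightarrow> bool" where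
  "E_linear_code n C \<longleftrightarrow> C \<subseteq> Evecs n \<and> (\<lambda>_. 0) \<in> C
     \<and> (\<forall>x\<in>C. \<forall>y\<in>C. (\<lambda>i. x i + y i) \<in> C)
     \<and> (\<forall>e::E. \<forall>x\<in>C. (\<lambda>i. e * x i) \<in> C)"

definition symp :: "nat \<Rightarrow> (nat \<Rightarrow> E) \<Rightarrow> (nat \<Rightarrow> E) \<Rightarrow> E" where
  "symp n z w = (\<Sum>i<n. z i * w (n + i)) + (\<Sum>i<n. z (n + i) * w i)"

definition perpSL :: "nat \<Rightarrow> (nat \<Rightarrow> E) set \<Rightarrow> (nat \<Rightarrow> E) set" where
  "perpSL n C = {z \<in> Evecs n. \<forall>w\<in>C. symp n z w = 0}"

definition perpSR :: "nat \<Rightarrow> (nat \<Rightarrow> E) set \<Rightarrow> (nat \<Rightarrow> E) set" where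
  "perpSR n C = {z \<in> Evecs n. \<forall>w\<in>C. symp n w z = 0}"

definition perpS :: "nat \<Rightarrow> (nat \<Rightarrow> E) set \<Rightarrow> (nat \<Rightarrow> E) set" where
  "perpS n C = perpSL n C \<inter> perpSR n C"

definition C_Res :: "nat \<Rightarrow> (nat \<Rightarrow> E) set \<Rightarrow> (nat \<Rightarrow> bool) set" where
  "C_Res n C = (\<lambda>x i. E_pi (x i)) ` C"

definition C_Tor :: "nat \<Rightarrow> (nat \<Rightarrow> E) set \<Rightarrow> (nat \<Rightarrow> bool) set" where
  "C_Tor n C = {v \<in> F2vecs n. (\<lambda>i. zeta_scal (v i)) \<in> C}"

definition free_code :: "nat \<Rightarrow> (nat \<Rightarrow> E) set \<Rightarrow> bool" where
  "free_code n C \<longleftrightarrow> C_Res n C = C_Tor n C"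

definition left_symplectic_nice :: "nat \<Rightarrow> (nat \<Rightarrow> E) set \<Rightarrow> bool" where
  "left_symplectic_nice n C \<longleftrightarrow> card C * card (perpSL n C) = card (UNIV :: E set) ^ (2*n)"

end

theory Submission
  imports Defs
begin

definition chi :: "bool \<Rightarrow> int" where "chi b = (if b then -1 else 1)"
definition xr :: "(nat \<Rightarrow> bool) \<Rightarrow> (nat \<Rightarrow> bool) \<Rightarrow> (nat \<Rightarrow> bool)" where
  "xr x y = (\<lambda>i. x i \<noteq> y i)"

lemma sum_cancel:
  assumes "finite S" "\<And>x. x\<in>S \<Longrightarrow> f x \<in> S" "\<And>x. x\<in>S \<Longrightarrow> f (f x) = x"
    "\<And>x. x\<in>S \<Longrightarrow> g (f x) = (\<not> g x)"
  shows "(\<Sum>x\<in>S. chi (g x)) = 0"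
proof -
  have bij: "bij_betw f S S"
    by (rule bij_betw_byWitness[of S f f]) (use assms in auto)
  have "(\<Sum>x\<in>S. chi (g x)) = (\<Sum>x\<in>S. chi (g (f x)))"
    using sum.reindex_bij_betw[OF bij, of "\<lambda>x. chi (g x)"] by simp
  also have "\<dots> = (\<Sum>x\<in>S. - chi (g x))" by (rule sum.cong) (auto simp: assms chi_def)
  also have "\<dots> = - (\<Sum>x\<in>S. chi (g x))" by (simp add: sum_negf)
  finally show ?thesis by simp
qed

lemma count_perp:
  fixes B :: "(nat\<Rightarrow>bool) \<Rightarrow> (nat\<Rightarrow>bool) \<Rightarrow> bool"
  assumes fin: "finite U" and VU: "V \<subseteq> U" and z: "(\<lambda>_. False) \<in> V"
   and Vc: "\<And>x y. x\<in>V \<Longrightarrow> y\<in>V \<Longrightarrow> xr x y \<in> V"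
   and Uc: "\<And>x y. x\<in>U \<Longrightarrow> y\<in>U \<Longrightarrow> xr x y \<in> U"
   and Bl: "\<And>x x' y. B (xr x x') y = (B x y \<noteq> B x' y)"
   and Br: "\<And>x y y'. B x (xr y y') = (B x y \<noteq> B x y')"
   and nd: "\<And>x. x\<in>U \<Longrightarrow> x \<noteq> (\<lambda>_. False) \<Longrightarrow> \<exists>y\<in>U. B x y"
  shows "card V * card {y\<in>U. \<forall>x\<in>V. \<not> B x y} = card U"
proof -
  have finV: "finite V" using fin VU finite_subset by blast
  have xx: "\<And>x a. xr (xr x a) a = x" by (auto simp: xr_def)
  have B0: "\<And>y. \<not> B (\<lambda>_. False) y"
  proof -
    fix y
    have "xr (\<lambda>_. False) (\<lambda>_. False) = (\<lambda>_. False)" by (simp add: xr_def)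
    then show "\<not> B (\<lambda>_. False) y" by (metis Bl)
  qed
  have inner1: "(\<Sum>x\<in>V. chi (B x y)) = (if (\<forall>x\<in>V. \<not> B x y) then int (card V) else 0)"
    if y: "y \<in> U" for y
  proof (cases "\<forall>x\<in>V. \<not> B x y")
    case True then show ?thesis by (simp add: chi_def)
  next
    case False
    then obtain x0 where x0: "x0 \<in> V" "B x0 y" by blast
    have "(\<Sum>x\<in>V. chi (B x y)) = 0"
      by (rule sum_cancel[where f="\<lambda>x. xr x x0"]) (use finV x0 Vc xx Bl in auto)
    then show ?thesis using False by auto
  qed
  have inner2: "(\<Sum>y\<in>U. chi (B x y)) = (if x = (\<lambda>_. False) then int (card U) else 0)"
    if x: "x \<in> V" for x
  proof (cases "x = (\<lambda>_. False)")
    case True then show ?thesis using B0 by (simp add: chi_def)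
  next
    case False
    then obtain y0 where y0: "y0 \<in> U" "B x y0" using nd x VU by blast
    have "(\<Sum>y\<in>U. chi (B x y)) = 0"
      by (rule sum_cancel[where f="\<lambda>y. xr y y0"]) (use fin y0 Uc xx Br in auto)
    then show ?thesis using False by simp
  qed
  have "int (card V * card {y\<in>U. \<forall>x\<in>V. \<not> B x y})
      = (\<Sum>y\<in>{y\<in>U. \<forall>x\<in>V. \<not> B x y}. int (card V))" by simp
  also have "\<dots> = (\<Sum>y\<in>U. if (\<forall>x\<in>V. \<not> B x y) then int (card V) else 0)"
    by (rule sum.inter_filter[OF fin])
  also have "\<dots> = (\<Sum>y\<in>U. \<Sum>x\<in>V. chi (B x y))"
    by (rule sum.cong) (auto simp: inner1)
  also have "\<dots> = (\<Sum>x\<in>V. \<Sum>y\<in>U. chi (B x y))" by (rule sum.swap)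
  also have "\<dots> = (\<Sum>x\<in>V. if x = (\<lambda>_. False) then int (card U) else 0)"
    by (rule sum.cong) (auto simp: inner2)
  also have "\<dots> = int (card U)" using finV z by simp
  finally show ?thesis by linarith
qed

definition pv :: "(nat \<Rightarrow> E) \<Rightarrow> nat \<Rightarrow> bool" where "pv z = (\<lambda>i. E_pi (z i))"
definition qv :: "(nat \<Rightarrow> E) \<Rightarrow> nat \<Rightarrow> bool" where "qv z = (\<lambda>i. snd (E_enc (z i)))"
definition ke :: "(nat \<Rightarrow> bool) \<Rightarrow> nat \<Rightarrow> E" where "ke u = (\<lambda>i. if u i then Kap else 0)"
definition ze :: "(nat \<Rightarrow> bool) \<Rightarrow> nat \<Rightarrow> E" where "ze v = (\<lambda>i. zeta_scal (v i))"
definition Bf :: "nat \<Rightarrow> (nat \<Rightarrow> bool) \<Rightarrow> (nat \<Rightarrow> bool) \<Rightarrow> bool" where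
  "Bf n u w = E_pi (symp n (ke u) (ke w))"

lemmas Esimps = times_E_def plus_E_def zero_E_def E_dec_def E_pi_def zeta_scal_def

lemma E_cases: "(x::E) = 0 \<or> x = Kap \<or> x = Tau \<or> x = Zet"
  by (cases x) (auto simp: zero_E_def)

lemma symp_add_left: "symp n (\<lambda>i. z i + z' i) w = symp n z w + symp n z' w"
  by (simp add: symp_def sum.distrib distrib_right algebra_simps)

lemma symp_add_right: "symp n w (\<lambda>i. z i + z' i) = symp n w z + symp n w z'"
  by (simp add: symp_def sum.distrib distrib_left algebra_simps)

lemma symp_scal: "symp n (\<lambda>i. e * z i) w = e * symp n z w"
  by (simp add: symp_def sum_distrib_left distrib_left mult.assoc)

lemma mult_pi: "(x::E) * y = x * (if E_pi y then Kap else 0)"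
  by (cases x; cases y) (simp_all add: Esimps)

lemma symp_pv: "symp n z w = symp n z (ke (pv w))"
  unfolding symp_def ke_def pv_def by (subst (1 2) mult_pi) simp

lemma decomp: "z = (\<lambda>i. ke (pv z) i + ze (qv z) i)"
  by (rule ext) (case_tac "z i"; simp add: Esimps ke_def pv_def qv_def ze_def)

lemma ke_scal: "ke u = (\<lambda>i. Kap * ke u i)"
  by (rule ext) (simp add: Esimps ke_def)

lemma ze_scal: "ze u = (\<lambda>i. Zet * ke u i)"
  by (rule ext) (simp add: Esimps ke_def ze_def)

lemma KZ_zero: "Kap * a + Zet * b = 0 \<longleftrightarrow> \<not> E_pi a \<and> \<not> E_pi b"
  by (cases a; cases b) (simp_all add: Esimps)

lemma key: "symp n z w = 0 \<longleftrightarrow> \<not> Bf n (pv z) (pv w) \<and> \<not> Bf n (qv z) (pv w)"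
proof -
  have "symp n z w = symp n (\<lambda>i. ke (pv z) i + ze (qv z) i) (ke (pv w))"
    by (subst symp_pv) (subst decomp, rule refl)
  also have "\<dots> = Kap * symp n (ke (pv z)) (ke (pv w)) + Zet * symp n (ke (qv z)) (ke (pv w))"
    by (simp add: symp_add_left ze_scal symp_scal flip: symp_scal[of n Kap] ke_scal)
  finally show ?thesis by (simp add: KZ_zero Bf_def)
qed

lemma ke_xr: "ke (xr u u') = (\<lambda>i. ke u i + ke u' i)"
  by (rule ext) (simp add: Esimps ke_def xr_def)

lemma pi_add: "E_pi (a + b) = (E_pi a \<noteq> E_pi b)"
  by (cases a; cases b) (simp_all add: Esimps)

lemma Bf_lin: "Bf n (xr u u') w = (Bf n u w \<noteq> Bf n u' w)"
  by (simp add: Bf_def ke_xr symp_add_left pi_add)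

lemma ke_comm: "ke u i * ke w j = ke w j * ke u i"
  by (simp add: Esimps ke_def)

lemma Bf_sym: "Bf n u w = Bf n w u"
  unfolding Bf_def symp_def by (simp add: ke_comm add.commute)

lemma Bf_linr: "Bf n w (xr u u') = (Bf n w u \<noteq> Bf n w u')"
  by (metis Bf_sym Bf_lin)

lemma mult_ke: "x * ke w i = (if w i then x else 0)"
  by (cases x) (simp_all add: Esimps ke_def)

lemma Bf_nd:
  assumes "u \<in> F2vecs n" "u \<noteq> (\<lambda>_. False)"
  shows "\<exists>w\<in>F2vecs n. Bf n u w"
proof -
  obtain j where j: "u j" using assms(2) by auto
  have j2: "j < 2*n" using assms(1) j unfolding F2vecs_def by (metis (mono_tags, lifting) mem_Collect_eq not_le)
  have kj: "ke u j = Kap" using j by (simp add: ke_def)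
  show ?thesis
  proof (cases "j < n")
    case True
    let ?w = "\<lambda>i. i = n + j"
    have w: "?w \<in> F2vecs n" using j2 True by (auto simp: F2vecs_def)
    have s: "symp n (ke u) (ke ?w) = Kap"
      unfolding symp_def mult_ke using True kj by simp
    show ?thesis using w s by (intro bexI[of _ ?w]) (simp_all add: Bf_def E_pi_def)
  next
    case False
    let ?w = "\<lambda>i. i = j - n"
    have "j - n < n" using j2 False by linarith
    have w: "?w \<in> F2vecs n" using j2 by (auto simp: F2vecs_def)
    have s: "symp n (ke u) (ke ?w) = Kap"
      unfolding symp_def mult_ke using False j2 kj \<open>j - n < n\<close> by simp
    show ?thesis using w s by (intro bexI[of _ ?w]) (simp_all add: Bf_def E_pi_def)
  qed
qed

definition zv :: "nat \<Rightarrow> bool" where "zv = (\<lambda>_. False)"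
definition perp :: "nat \<Rightarrow> (nat \<Rightarrow> bool) set \<Rightarrow> (nat \<Rightarrow> bool) set" where
  "perp n X = {u \<in> F2vecs n. \<forall>x\<in>X. \<not> Bf n x u}"
definition subsp :: "nat \<Rightarrow> (nat \<Rightarrow> bool) set \<Rightarrow> bool" where
  "subsp n V \<longleftrightarrow> V \<subseteq> F2vecs n \<and> zv \<in> V \<and> (\<forall>x\<in>V. \<forall>y\<in>V. xr x y \<in> V)"

lemma F2vecs_eq: "F2vecs n = (\<lambda>S i. i \<in> S) ` Pow {..<2*n}"
proof (rule set_eqI, rule iffI)
  fix x assume x: "x \<in> F2vecs n"
  have "x = (\<lambda>i. i \<in> {i. i < 2*n \<and> x i})"
    using x by (auto simp: F2vecs_def fun_eq_iff) (metis not_le)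
  then show "x \<in> (\<lambda>S i. i \<in> S) ` Pow {..<2*n}" by blast
qed (auto simp: F2vecs_def)

lemma F2vecs_fin: "finite (F2vecs n)"
  by (simp add: F2vecs_eq)

lemma F2vecs_card: "card (F2vecs n) = 2 ^ (2*n)"
proof -
  have "inj_on (\<lambda>S i. i \<in> S) (Pow {..<2*n})"
    by (rule inj_onI) (auto simp: fun_eq_iff)
  then show ?thesis by (simp add: F2vecs_eq card_image card_Pow)
qed

lemma xr_F2: "x \<in> F2vecs n \<Longrightarrow> y \<in> F2vecs n \<Longrightarrow> xr x y \<in> F2vecs n"
  by (simp add: F2vecs_def xr_def)

lemma Bf_zero: "\<not> Bf n x zv" "\<not> Bf n zv x"
proof -
  have "xr zv zv = zv" by (simp add: xr_def zv_def)
  then show "\<not> Bf n x zv" "\<not> Bf n zv x" by (metis Bf_linr, metis Bf_lin)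
qed

lemma card_formula:
  assumes "subsp n V"
  shows "card V * card (perp n V) = 2 ^ (2*n)"
  unfolding perp_def F2vecs_card[symmetric]
  by (rule count_perp) (use assms in \<open>auto simp: subsp_def zv_def F2vecs_fin xr_F2 Bf_lin Bf_linr Bf_nd\<close>)

lemma perp_subsp: "subsp n (perp n X)"
proof -
  have "zv \<in> F2vecs n" by (simp add: zv_def F2vecs_def)
  then show ?thesis
    unfolding subsp_def perp_def using Bf_zero[of n] by (auto simp: xr_F2 Bf_linr)
qed

lemma F2_subsp: "subsp n (F2vecs n)"
  unfolding subsp_def by (auto simp: xr_F2 zv_def F2vecs_def xr_def)

lemma perp_anti: "X \<subseteq> Y \<Longrightarrow> perp n Y \<subseteq> perp n X"
  unfolding perp_def by auto

lemma perp_perp: "X \<subseteq> F2vecs n \<Longrightarrow> X \<subseteq> perp n (perp n X)"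
proof
  fix x assume X: "X \<subseteq> F2vecs n" and x: "x \<in> X"
  have "\<not> Bf n y x" if "y \<in> perp n X" for y
    using that x Bf_sym[of n y x] unfolding perp_def by auto
  then show "x \<in> perp n (perp n X)" using X x unfolding perp_def by auto
qed

lemma perp_perp_eq:
  assumes "subsp n V" shows "perp n (perp n V) = V"
proof -
  have VF: "V \<subseteq> F2vecs n" using assms by (simp add: subsp_def)
  have e1: "card V * card (perp n V) = 2 ^ (2*n)" by (rule card_formula[OF assms])
  have e2: "card (perp n V) * card (perp n (perp n V)) = 2 ^ (2*n)" by (rule card_formula[OF perp_subsp])
  have fP: "finite (perp n V)" by (rule finite_subset[OF _ F2vecs_fin]) (auto simp: perp_def)
  have "zv \<in> perp n V" using perp_subsp[of n V] by (simp add: subsp_def)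
  then have "card (perp n V) > 0" using fP by (auto simp: card_gt_0_iff)
  moreover have "card V * card (perp n V) = card (perp n (perp n V)) * card (perp n V)"
    using e1 e2 by (metis mult.commute)
  ultimately have cV: "card V = card (perp n (perp n V))" by simp
  have fPP: "finite (perp n (perp n V))" by (rule finite_subset[OF _ F2vecs_fin]) (auto simp: perp_def)
  show ?thesis using card_subset_eq[OF fPP perp_perp[OF VF] cV] by simp
qed


lemma pv_F2: "z \<in> Evecs n \<Longrightarrow> pv z \<in> F2vecs n"
  by (simp add: Evecs_def F2vecs_def pv_def E_pi_def zero_E_def)
lemma qv_F2: "z \<in> Evecs n \<Longrightarrow> qv z \<in> F2vecs n"
  by (simp add: Evecs_def F2vecs_def qv_def zero_E_def)
lemma kz_Evecs: "u \<in> F2vecs n \<Longrightarrow> v \<in> F2vecs n \<Longrightarrow> (\<lambda>i. ke u i + ze v i) \<in> Evecs n"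
  by (simp add: Evecs_def F2vecs_def ke_def ze_def zeta_scal_def)
lemma pv_kz: "pv (\<lambda>i. ke u i + ze v i) = u"
  by (rule ext) (simp add: pv_def ke_def ze_def Esimps)
lemma qv_kz: "qv (\<lambda>i. ke u i + ze v i) = v"
  by (rule ext) (simp add: qv_def ke_def ze_def Esimps)

lemma card_split:
  assumes "A \<subseteq> F2vecs n" "B \<subseteq> F2vecs n"
  shows "card {z \<in> Evecs n. pv z \<in> A \<and> qv z \<in> B} = card A * card B"
proof -
  let ?S = "{z \<in> Evecs n. pv z \<in> A \<and> qv z \<in> B}"
  have inj: "inj_on (\<lambda>z. (pv z, qv z)) ?S"
  proof (rule inj_onI)
    fix z z' assume "(pv z, qv z) = (pv z', qv z')"
    then have e: "pv z = pv z'" "qv z = qv z'" by simp_all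
    have "z = (\<lambda>i. ke (pv z) i + ze (qv z) i)" by (rule decomp)
    also have "\<dots> = (\<lambda>i. ke (pv z') i + ze (qv z') i)" using e by simp
    also have "\<dots> = z'" by (rule decomp[symmetric])
    finally show "z = z'" .
  qed
  have "(\<lambda>z. (pv z, qv z)) ` ?S = A \<times> B"
  proof
    show "(\<lambda>z. (pv z, qv z)) ` ?S \<subseteq> A \<times> B" by auto
    show "A \<times> B \<subseteq> (\<lambda>z. (pv z, qv z)) ` ?S"
    proof
      fix p assume p: "p \<in> A \<times> B"
      obtain u v where uv: "p = (u, v)" "u \<in> A" "v \<in> B" using p by auto
      then have "(\<lambda>i. ke u i + ze v i) \<in> ?S" using assms kz_Evecs[of u n v] by (auto simp: pv_kz qv_kz)
      then show "p \<in> (\<lambda>z. (pv z, qv z)) ` ?S" using uv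
        by (intro image_eqI[of _ _ "\<lambda>i. ke u i + ze v i"]) (simp_all add: pv_kz qv_kz)
    qed
  qed
  then show ?thesis using card_image[OF inj] by (simp add: card_cartesian_product)
qed

lemma pv_ze: "pv (ze t) = zv" by (rule ext) (simp add: pv_def ze_def zv_def Esimps)
lemma qv_ze: "qv (ze t) = t" by (rule ext) (simp add: qv_def ze_def Esimps)
lemma pv_ke: "pv (ke t) = t" by (rule ext) (simp add: pv_def ke_def Esimps)
lemma qv_ke: "qv (ke t) = zv" by (rule ext) (simp add: qv_def ke_def zv_def Esimps)

lemma key': "symp n z w = 0 \<longleftrightarrow> \<not> Bf n (pv w) (pv z) \<and> \<not> Bf n (pv w) (qv z)"
  using key[of n z w] Bf_sym[of n "pv w" "pv z"] Bf_sym[of n "pv w" "qv z"] by simp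

context
  fixes n :: nat and C :: "(nat \<Rightarrow> E) set"
  assumes L: "E_linear_code n C"
begin

lemma CE: "C \<subseteq> Evecs n" using L by (simp add: E_linear_code_def)
lemma C0: "(\<lambda>_. 0) \<in> C" using L by (simp add: E_linear_code_def)
lemma Cadd: "x \<in> C \<Longrightarrow> y \<in> C \<Longrightarrow> (\<lambda>i. x i + y i) \<in> C" using L by (simp add: E_linear_code_def)
lemma Cscal: "x \<in> C \<Longrightarrow> (\<lambda>i. e * x i) \<in> C" using L by (simp add: E_linear_code_def)

lemma Res_eq: "C_Res n C = pv ` C" by (simp add: C_Res_def pv_def[abs_def])
lemma Tor_eq: "C_Tor n C = {v \<in> F2vecs n. ze v \<in> C}" by (simp add: C_Tor_def ze_def[abs_def])

lemma ze_pv: "x \<in> C \<Longrightarrow> ze (pv x) \<in> C"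
proof -
  assume x: "x \<in> C"
  have "(\<lambda>i. Zet * x i) = ze (pv x)"
    by (rule ext) (case_tac "x i"; simp add: pv_def ze_def Esimps)
  then show ?thesis using Cscal[OF x, of Zet] by simp
qed

lemma ke_pv: "x \<in> C \<Longrightarrow> ke (pv x) \<in> C"
proof -
  assume x: "x \<in> C"
  have "(\<lambda>i. Kap * x i) = ke (pv x)"
    by (rule ext) (case_tac "x i"; simp add: pv_def ke_def Esimps)
  then show ?thesis using Cscal[OF x, of Kap] by simp
qed

lemma ze_qv: "x \<in> C \<Longrightarrow> ze (qv x) \<in> C"
proof -
  assume x: "x \<in> C"
  have "(\<lambda>i. x i + Kap * x i) = ze (qv x)"
    by (rule ext) (case_tac "x i"; simp add: qv_def ze_def Esimps)
  then show ?thesis using Cadd[OF x Cscal[OF x, of Kap]] by simp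
qed

lemma RT: "C_Res n C \<subseteq> C_Tor n C"
  using ze_pv pv_F2 CE by (auto simp: Res_eq Tor_eq)

lemma qvT: "x \<in> C \<Longrightarrow> qv x \<in> C_Tor n C"
  using ze_qv qv_F2 CE by (auto simp: Tor_eq)

lemma R_F2: "C_Res n C \<subseteq> F2vecs n" using pv_F2 CE by (auto simp: Res_eq)
lemma T_F2: "C_Tor n C \<subseteq> F2vecs n" by (auto simp: Tor_eq)

lemma C_char: "C = {z \<in> Evecs n. pv z \<in> C_Res n C \<and> qv z \<in> C_Tor n C}"
proof
  show "C \<subseteq> {z \<in> Evecs n. pv z \<in> C_Res n C \<and> qv z \<in> C_Tor n C}"
    using CE qvT by (auto simp: Res_eq)
  show "{z \<in> Evecs n. pv z \<in> C_Res n C \<and> qv z \<in> C_Tor n C} \<subseteq> C"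
  proof
    fix z assume z: "z \<in> {z \<in> Evecs n. pv z \<in> C_Res n C \<and> qv z \<in> C_Tor n C}"
    then obtain x where x: "x \<in> C" "pv z = pv x" by (auto simp: Res_eq)
    have k: "ke (pv z) \<in> C" using ke_pv[OF x(1)] x(2) by simp
    have q: "ze (qv z) \<in> C" using z by (simp add: Tor_eq)
    show "z \<in> C" using Cadd[OF k q] decomp[of z] by simp
  qed
qed

lemma pv_add: "pv (\<lambda>i. x i + y i) = xr (pv x) (pv y)"
  by (simp add: pv_def xr_def pi_add)

lemma ze_xr: "ze (xr a b) = (\<lambda>i. ze a i + ze b i)"
  by (rule ext) (simp add: ze_def xr_def Esimps)

lemma R_subsp: "subsp n (C_Res n C)"
proof -
  have "zv = pv (\<lambda>_. 0)" by (simp add: zv_def pv_def E_pi_def zero_E_def)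
  then have "zv \<in> C_Res n C" using C0 by (simp add: Res_eq)
  moreover have "\<forall>x\<in>C_Res n C. \<forall>y\<in>C_Res n C. xr x y \<in> C_Res n C"
    using Cadd pv_add by (auto simp: Res_eq) (metis image_eqI pv_add Cadd)
  ultimately show ?thesis using R_F2 by (simp add: subsp_def)
qed

lemma T_subsp: "subsp n (C_Tor n C)"
proof -
  have "ze zv = (\<lambda>_. 0)" by (simp add: zv_def ze_def zeta_scal_def)
  then have "zv \<in> C_Tor n C" using C0 by (simp add: Tor_eq zv_def F2vecs_def)
  moreover have "\<forall>x\<in>C_Tor n C. \<forall>y\<in>C_Tor n C. xr x y \<in> C_Tor n C"
    using Cadd by (auto simp: Tor_eq ze_xr xr_F2)
  ultimately show ?thesis using T_F2 by (simp add: subsp_def)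
qed

lemma SL_eq: "perpSL n C = {z \<in> Evecs n. pv z \<in> perp n (C_Res n C) \<and> qv z \<in> perp n (C_Res n C)}"
  unfolding perpSL_def perp_def Res_eq using pv_F2 qv_F2 by (auto simp: key')

lemma SR_eq: "perpSR n C = {z \<in> Evecs n. pv z \<in> perp n (C_Tor n C)}"
proof (rule set_eqI, rule iffI)
  fix z assume z: "z \<in> perpSR n C"
  then have zE: "z \<in> Evecs n" and h: "\<forall>w\<in>C. \<not> Bf n (pv w) (pv z) \<and> \<not> Bf n (qv w) (pv z)"
    by (auto simp: perpSR_def key)
  have "\<not> Bf n t (pv z)" if "t \<in> C_Tor n C" for t
    using h[rule_format, of "ze t"] that by (simp add: Tor_eq qv_ze)
  then show "z \<in> {z \<in> Evecs n. pv z \<in> perp n (C_Tor n C)}" using zE pv_F2 by (auto simp: perp_def)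
next
  fix z assume z: "z \<in> {z \<in> Evecs n. pv z \<in> perp n (C_Tor n C)}"
  have "\<not> Bf n (pv w) (pv z) \<and> \<not> Bf n (qv w) (pv z)" if w: "w \<in> C" for w
  proof -
    have "pv w \<in> C_Tor n C" using RT w by (auto simp: Res_eq)
    moreover have "qv w \<in> C_Tor n C" using qvT w by simp
    ultimately show ?thesis using z by (auto simp: perp_def)
  qed
  then show "z \<in> perpSR n C" using z by (auto simp: perpSR_def key)
qed

end

lemma card_E: "card (UNIV :: E set) = 4"
proof -
  have "(UNIV :: E set) = {E0, Kap, Tau, Zet}" by (auto intro: E.exhaust)
  moreover have "card {E0, Kap, Tau, Zet} = 4" by simp
  ultimately show ?thesis by (simp only:)
qed

theorem mainTheorem10:
  fixes n :: nat and C :: "(nat \<Rightarrow> E) set"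
  assumes "E_linear_code n C"
  shows "(perpSL n C = perpS n C \<longleftrightarrow> left_symplectic_nice n C)
       \<and> (perpSL n C = perpS n C \<longleftrightarrow> free_code n C)"
proof -
  note L = assms
  define R where "R = C_Res n C"
  define T where "T = C_Tor n C"
  define P where "P = perp n R"
  have RT: "R \<subseteq> T" using RT[OF L] by (simp add: R_def T_def)
  have Rs: "subsp n R" using R_subsp[OF L] by (simp add: R_def)
  have Ts: "subsp n T" using T_subsp[OF L] by (simp add: T_def)
  have finT: "finite T" using Ts F2vecs_fin finite_subset by (auto simp: subsp_def)
  have finR: "finite R" using Rs F2vecs_fin finite_subset by (auto simp: subsp_def)
  have finP: "finite P" unfolding P_def by (rule finite_subset[OF _ F2vecs_fin]) (auto simp: perp_def)
  have cR: "card R > 0" using Rs finR by (auto simp: subsp_def card_gt_0_iff)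
  have cP: "card P > 0" using perp_subsp[of n R] finP by (auto simp: subsp_def card_gt_0_iff P_def)
  have RF: "R \<subseteq> F2vecs n" "T \<subseteq> F2vecs n" "P \<subseteq> F2vecs n"
    using Rs Ts perp_subsp[of n R] by (auto simp: subsp_def P_def)
  have SL: "perpSL n C = {z \<in> Evecs n. pv z \<in> P \<and> qv z \<in> P}"
    using SL_eq[OF L] by (simp add: P_def R_def)
  have SR: "perpSR n C = {z \<in> Evecs n. pv z \<in> perp n T}"
    using SR_eq[OF L] by (simp add: T_def)
  have e1: "perpSL n C = perpS n C \<longleftrightarrow> P \<subseteq> perp n T"
  proof
    assume h: "perpSL n C = perpS n C"
    show "P \<subseteq> perp n T"
    proof
      fix u assume u: "u \<in> P"
      have zP: "zv \<in> P" using perp_subsp[of n R] by (simp add: subsp_def P_def)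
      have uF: "u \<in> F2vecs n" using u RF by auto
      have "zv \<in> F2vecs n" using zP RF by auto
      have "ke u \<in> Evecs n" using uF by (simp add: Evecs_def F2vecs_def ke_def)
      then have "ke u \<in> perpSL n C" using u zP uF
        unfolding SL by (simp add: pv_ke qv_ke)
      then have "ke u \<in> perpSR n C" using h unfolding perpS_def by blast
      then show "u \<in> perp n T" unfolding SR by (simp add: pv_ke)
    qed
  next
    assume PT: "P \<subseteq> perp n T"
    have "perpSL n C \<subseteq> perpSR n C" unfolding SL SR using PT by blast
    then show "perpSL n C = perpS n C" unfolding perpS_def by blast
  qed
  have e2: "P \<subseteq> perp n T \<longleftrightarrow> T \<subseteq> R"
  proof
    assume "P \<subseteq> perp n T"
    then have "perp n (perp n T) \<subseteq> perp n P" by (rule perp_anti)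
    then show "T \<subseteq> R" using perp_perp_eq[OF Ts] perp_perp_eq[OF Rs] by (simp add: P_def)
  next
    assume "T \<subseteq> R" then show "P \<subseteq> perp n T" unfolding P_def by (rule perp_anti)
  qed
  have TR: "T \<subseteq> R \<longleftrightarrow> card T = card R"
    using RT finT card_subset_eq[OF finT RT] by auto
  have free: "free_code n C \<longleftrightarrow> T \<subseteq> R"
    using RT by (auto simp: free_code_def R_def T_def)
  have cC: "card C = card R * card T"
    using card_split[OF RF(1,2)] C_char[OF L] by (simp add: R_def T_def)
  have cSL: "card (perpSL n C) = card P * card P"
    using card_split[OF RF(3) RF(3)] SL by simp
  have cf: "card R * card P = 2 ^ (2*n)" using card_formula[OF Rs] by (simp add: P_def)
  have four: "(4::nat) ^ (2*n) = card R * (card R * card P * card P)"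
  proof -
    have "(4::nat) ^ (2*n) = (2 ^ (2*n)) * (2 ^ (2*n))"
      by (metis mult_2 power_add power_mult_distrib numeral_Bit0 mult.commute mult_2_right numeral_times_numeral semiring_norm(12) power_mult)
    then show ?thesis using cf by (simp add: algebra_simps)
  qed
  have nice: "left_symplectic_nice n C \<longleftrightarrow> card T = card R"
  proof -
    have "left_symplectic_nice n C \<longleftrightarrow> card T * (card R * card P * card P) = card R * (card R * card P * card P)"
      unfolding left_symplectic_nice_def card_E cC cSL four by (simp add: algebra_simps)
    also have "\<dots> \<longleftrightarrow> card T = card R" using cR cP by simp
    finally show ?thesis .
  qed
  show ?thesis using e1 e2 TR free nice by blast
qed

end
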